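(* Let $f$ be holomorphic on the open unit disk $\Delta=\{z\in\mathbb C:|z|<1\}$, let $0<r<1$ and $K=\overline\Delta_r=\{z:|z|\le r\}$. For $n\ge 0$ let $N_K(n)$ denote the maximal number (possibly $+\infty$) of zeros on $K$ of functions $f-p$ with $p\in\mathcal P_n$. If $\lim_{n\to\infty}N_K(n)/n=\infty$, then $f$ is a polynomial.
   Context: $\mathcal P_n$ denotes the space of complex polynomials in one variable of degree at most $n$. Zeros are counted with multiplicity. *)

theory Defs
  imports "HOL-Complex_Analysis.Complex_Analysis" "HOL-Computational_Algebra.Polynomial"
    "HOL-Library.Extended_Real"
begin

definition zero_count :: "(complex \<Rightarrow> complex) \<Rightarrow> complex set \<Rightarrow> enat" where
  "zero_count g K =
     (if infinite {z \<in> K. g z = 0} then \<infinity>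
      else enat (\<Sum>z\<in>{z \<in> K. g z = 0}. nat (zorder g z)))"

definition N_K :: "(complex \<Rightarrow> complex) \<Rightarrow> complex set \<Rightarrow> nat \<Rightarrow> enat" where
  "N_K f K n = (SUP p \<in> {p :: complex poly. degree p \<le> n}. zero_count (\<lambda>z. f z - poly p z) K)"

end

theory Submission
  imports Defs
begin

lemma higher_deriv_poly: "(deriv ^^ j) (poly P) = poly ((pderiv ^^ j) P)"
proof (induction j)
  case 0 then show ?case by simp
next
  case (Suc j)
  have "deriv (poly ((pderiv ^^ j) P)) = poly (pderiv ((pderiv ^^ j) P))"
    by (rule ext, rule DERIV_imp_deriv, rule poly_DERIV)
  then show ?case using Suc by simp
qed

lemma higher_deriv_poly_0: "(deriv ^^ j) (poly P) 0 = fact j * coeff P j"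
  by (simp add: higher_deriv_poly poly_0_coeff_0 coeff_higher_pderiv pochhammer_fact)

lemma poly_coeff_bound:
  fixes P :: "complex poly"
  assumes "0 < r" and m: "\<And>s. norm s = r \<Longrightarrow> norm (poly P s) \<le> m"
  shows "norm (coeff P j) * r ^ j \<le> m"
proof -
  have "norm ((deriv ^^ j) (poly P) 0) \<le> fact j * m / r ^ j"
    by (rule Cauchy_inequality) (use assms in \<open>auto intro: holomorphic_intros continuous_intros simp: norm_minus_commute\<close>)
  then have "fact j * norm (coeff P j) \<le> fact j * (m / r ^ j)"
    by (simp add: higher_deriv_poly_0 norm_mult)
  then have "norm (coeff P j) \<le> m / r ^ j"
    by (metis fact_gt_zero mult_le_cancel_left_pos)
  then show ?thesis using assms(1) by (simp add: field_simps)
qed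

lemma poly_growth_bound:
  fixes P :: "complex poly"
  assumes "degree P \<le> n" "0 < r" "r \<le> R" and m: "\<And>s. norm s = r \<Longrightarrow> norm (poly P s) \<le> m"
    and t: "norm t \<le> R"
  shows "norm (poly P t) \<le> (real n+1) * (R/r)^n * m"
proof -
  have m0: "0 \<le> m" using m[of "of_real r"] assms(2) by (smt (verit) norm_ge_zero norm_of_real)
  have "poly P t = (\<Sum>i\<le>degree P. coeff P i * t ^ i)"
    by (simp add: poly_altdef)
  also have "\<dots> = (\<Sum>i\<le>n. coeff P i * t ^ i)"
    using assms(1) by (intro sum.mono_neutral_left) (auto simp: coeff_eq_0)
  finally have "poly P t = (\<Sum>i\<le>n. coeff P i * t ^ i)" .
  then have "norm (poly P t) \<le> (\<Sum>i\<le>n. norm (coeff P i) * norm t ^ i)"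
    by (metis (no_types, lifting) norm_mult norm_power norm_sum order.refl sum_mono order_trans)
  also have "\<dots> \<le> (\<Sum>i\<le>n. (R/r)^n * m)"
  proof (rule sum_mono)
    fix i assume i: "i \<in> {..n}"
    have "norm (coeff P i) * norm t ^ i \<le> norm (coeff P i) * R ^ i"
      by (intro mult_left_mono power_mono t) auto
    also have "\<dots> = (norm (coeff P i) * r ^ i) * (R/r)^i"
      using assms(2) by (simp add: field_simps power_divide)
    also have "\<dots> \<le> m * (R/r)^i"
      by (intro mult_right_mono poly_coeff_bound assms) (use assms in auto)
    also have "\<dots> \<le> m * (R/r)^n"
      using i assms(2,3) by (intro mult_left_mono power_increasing m0) (auto simp: field_simps)
    finally show "norm (coeff P i) * norm t ^ i \<le> (R/r)^n * m" by (simp add: mult.commute)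
  qed
  also have "\<dots> = (real n+1) * (R/r)^n * m" by simp
  finally show ?thesis .
qed

lemma blaschke_identity:
  fixes z w :: complex and R :: real
  shows "norm (of_real (R^2) - cnj z * w)^2 - R^2 * norm (w - z)^2 = (R^2 - norm w^2) * (R^2 - norm z^2)"
proof -
  obtain a b where z: "z = Complex a b" by (cases z)
  obtain c d where w: "w = Complex c d" by (cases w)
  show ?thesis unfolding z w
    apply (simp only: cmod_power2)
    by (simp add: algebra_simps power2_eq_square)
qed

lemma blaschke_sphere:
  fixes z t :: complex
  assumes "norm t = R"
  shows "norm (of_real (R^2) - cnj z * t) = R * norm (t - z)"
proof -
  have "of_real (R^2) = t * cnj t" using assms complex_norm_square[of t]
    by simp
  then have "of_real (R^2) - cnj z * t = t * cnj (t - z)" by (simp add: algebra_simps)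
  then show ?thesis using assms by (metis complex_cnj_diff complex_mod_cnj norm_mult)
qed

lemma blaschke_ineq:
  fixes z w :: complex
  assumes "0 < r" "r < R" "norm z \<le> r" "norm w \<le> r"
  shows "R * norm (w - z) \<le> (2*r*R/(R^2+r^2)) * norm (of_real (R^2) - cnj z * w)"
proof -
  define D where "D = norm (of_real (R^2) - cnj z * w)"
  have id: "D^2 - R^2 * norm (w - z)^2 = (R^2 - norm w^2) * (R^2 - norm z^2)"
    unfolding D_def by (rule blaschke_identity)
  have nz: "norm (cnj z * w) \<le> r^2"
    using assms by (simp add: norm_mult power2_eq_square mult_mono')
  have nR: "norm (of_real (R^2) :: complex) = R^2" by (simp only: norm_of_real) simp
  have "D \<le> R^2 + r^2" unfolding D_def
    using norm_triangle_ineq4[of "of_real (R^2)" "cnj z * w"] nz nR by linarith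
  moreover have D0: "0 \<le> D" unfolding D_def by simp
  ultimately have D2: "D^2 \<le> (R^2 + r^2)^2" by (simp add: power_mono)
  have w2: "norm w ^2 \<le> r^2" "norm z^2 \<le> r^2" using assms by (auto intro: power_mono)
  have "(R^2 - r^2)^2 \<le> (R^2 - norm w^2) * (R^2 - norm z^2)"
  proof -
    have "R^2 - r^2 \<le> R^2 - norm w^2" "R^2 - r^2 \<le> R^2 - norm z^2" using w2 by auto
    moreover have "0 \<le> R^2 - r^2" using assms by (simp add: power_mono)
    ultimately show ?thesis by (metis mult_mono power2_eq_square order_trans)
  qed
  then have A: "R^2 * norm (w - z)^2 \<le> D^2 - (R^2 - r^2)^2" using id by linarith
  define q where "q = 2*r*R/(R^2+r^2)"
  have pos: "0 < R^2 + r^2" using assms by (simp add: add_pos_pos)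
  have e1: "(R^2+r^2)^2 - (2*r*R)^2 = (R^2-r^2)^2" by algebra
  have "1 - q^2 = ((R^2+r^2)^2 - (2*r*R)^2)/(R^2+r^2)^2"
    unfolding q_def using pos assms(1) by (simp add: diff_divide_distrib power_divide)
  also have "\<dots> = ((R^2 - r^2)/(R^2+r^2))^2" by (simp only: e1 power_divide)
  finally have "1 - q^2 = ((R^2 - r^2)/(R^2+r^2))^2" .
  then have "D^2 - (R^2 - r^2)^2 \<le> q^2 * D^2"
  proof -
    assume e: "1 - q^2 = ((R^2 - r^2)/(R^2+r^2))^2"
    have "D^2 * ((R^2 - r^2)/(R^2+r^2))^2 \<le> (R^2+r^2)^2 * ((R^2 - r^2)/(R^2+r^2))^2"
      using D2 by (simp add: mult_right_mono)
    also have "\<dots> = (R^2 - r^2)^2" using pos by (simp add: power_divide)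
    finally have "D^2 * (1 - q^2) \<le> (R^2 - r^2)^2" using e by simp
    then show ?thesis by (simp add: algebra_simps)
  qed
  with A have "(R * norm (w - z))^2 \<le> (q * D)^2" by (simp add: power_mult_distrib)
  moreover have "0 \<le> q * D" unfolding q_def using assms D0 pos by simp
  ultimately have "R * norm (w - z) \<le> q * D" by (rule power2_le_imp_le)
  then show ?thesis unfolding q_def D_def .
qed

lemma zero_divide_out:
  assumes holo: "g holomorphic_on S" and S: "open S" "connected S" and a: "a \<in> S"
    and nz: "\<exists>w\<in>S. g w \<noteq> 0"
  obtains h where "h holomorphic_on S" "\<And>w. w \<in> S \<Longrightarrow> g w = (w - a)^nat(zorder g a) * h w"
proof -
  define m where "m = nat (zorder g a)"
  define zp where "zp = zor_poly g a"
  obtain r where r: "r > 0" "cball a r \<subseteq> S" "zp holomorphic_on cball a r"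
    "\<And>w. w \<in> cball a r \<Longrightarrow> g w = zp w * (w - a)^m"
    using zorder_exist_zero[OF holo S a nz] unfolding m_def zp_def by blast
  define h where "h = (\<lambda>w. if w = a then zp a else g w / (w - a)^m)"
  have eq: "g w = (w - a)^m * h w" if "w \<in> S" for w
  proof (cases "w = a")
    case True
    then show ?thesis using r(4)[of a] r(1) by (simp add: h_def)
  next
    case False
    then show ?thesis by (simp add: h_def)
  qed
  have h1: "h holomorphic_on (S - {a})"
  proof (rule holomorphic_transform[where f = "\<lambda>w. g w / (w - a)^m"])
    show "(\<lambda>w. g w / (w - a) ^ m) holomorphic_on S - {a}"
      by (intro holomorphic_intros holomorphic_on_subset[OF holo]) auto
  qed (auto simp: h_def)
  have h2: "h holomorphic_on ball a r"
  proof (rule holomorphic_transform[where f = zp])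
    show "zp holomorphic_on ball a r" using r(3) by (rule holomorphic_on_subset) auto
    fix w assume w: "w \<in> ball a r"
    show "zp w = h w"
    proof (cases "w = a")
      case False
      then show ?thesis using r(4)[of w] w by (simp add: h_def)
    qed (simp add: h_def)
  qed
  have "h holomorphic_on ((S - {a}) \<union> ball a r)"
    by (rule holomorphic_on_Un[OF h1 h2]) (use S in auto)
  then have "h holomorphic_on S"
    by (rule holomorphic_on_subset) (use r(1) in auto)
  then show ?thesis using that eq unfolding m_def by blast
qed

lemma factor_zeros:
  assumes holo: "g holomorphic_on S" and S: "open S" "connected S"
    and nz: "\<exists>w\<in>S. g w \<noteq> 0" and Z: "finite Z" "Z \<subseteq> S"
  shows "\<exists>h. h holomorphic_on S \<and> (\<forall>w\<in>S. g w = (\<Prod>z\<in>Z. (w - z)^nat(zorder g z)) * h w)"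
  using Z
proof (induction Z rule: finite_induct)
  case empty
  then show ?case using holo by auto
next
  case (insert a Z)
  then obtain h where h: "h holomorphic_on S" "\<And>w. w \<in> S \<Longrightarrow> g w = (\<Prod>z\<in>Z. (w - z)^nat(zorder g z)) * h w"
    by auto
  define \<omega> where "\<omega> = (\<lambda>w. \<Prod>z\<in>Z. (w - z)^nat(zorder g z))"
  have aS: "a \<in> S" using insert by auto
  have hnz: "\<exists>w\<in>S. h w \<noteq> 0" using nz h(2) by force
  obtain h2 where h2: "h2 holomorphic_on S" "\<And>w. w \<in> S \<Longrightarrow> h w = (w - a)^nat(zorder h a) * h2 w"
    using zero_divide_out[OF h(1) S aS hnz] by blast
  have "zorder h a = zorder g a"
  proof -
    have ev: "eventually (\<lambda>w. g w = \<omega> w * h w) (at a)"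
      using eventually_at_in_open'[OF S(1) aS] by eventually_elim (use h(2) in \<open>auto simp: \<omega>_def\<close>)
    obtain b where b: "b \<in> S" "g b \<noteq> 0" using nz by auto
    have ev2: "eventually (\<lambda>w. \<omega> w * h w \<noteq> 0) (at a)"
      using non_zero_neighbour_alt[OF holo S aS b] ev by eventually_elim auto
    have "zorder g a = zorder (\<lambda>w. \<omega> w * h w) a"
      by (rule zorder_cong[OF ev refl])
    also have "\<dots> = zorder \<omega> a + zorder h a"
    proof (rule zorder_times_analytic)
      show "\<omega> analytic_on {a}" unfolding \<omega>_def by (intro analytic_intros)
      show "h analytic_on {a}" using h(1) S(1) aS analytic_at by blast
    qed (rule ev2)
    also have "zorder \<omega> a = 0"
      by (rule zorder_eq_0I) (use insert in \<open>auto simp: \<omega>_def intro!: analytic_intros\<close>)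
    finally show ?thesis by simp
  qed
  then have "\<forall>w\<in>S. g w = (\<Prod>z\<in>insert a Z. (w - z)^nat(zorder g z)) * h2 w"
    using h(2) h2(2) insert by (simp add: algebra_simps)
  then show ?case using h2(1) by blast
qed

lemma core:
  fixes g :: "complex \<Rightarrow> complex"
  assumes holo: "g holomorphic_on ball 0 \<rho>" and rR: "0 < r" "r < R" "R < \<rho>"
    and fin: "finite {z \<in> cball 0 r. g z = 0}"
    and nz: "\<exists>w\<in>ball 0 \<rho>. g w \<noteq> 0"
    and M: "\<And>t. norm t = R \<Longrightarrow> norm (g t) \<le> M"
    and w: "norm w \<le> r"
  shows "norm (g w) \<le> (2*r*R/(R^2+r^2)) ^ (\<Sum>z\<in>{z \<in> cball 0 r. g z = 0}. nat (zorder g z)) * M"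
proof -
  define Z where "Z = {z \<in> cball 0 r. g z = 0}"
  define m where "m = (\<lambda>z. nat (zorder g z))"
  define q where "q = 2*r*R/(R^2+r^2)"
  have ZS: "Z \<subseteq> ball 0 \<rho>" using rR unfolding Z_def by auto
  obtain h where h: "h holomorphic_on ball 0 \<rho>" "\<And>w. w \<in> ball 0 \<rho> \<Longrightarrow> g w = (\<Prod>z\<in>Z. (w - z)^m z) * h w"
    using factor_zeros[OF holo open_ball convex_connected[OF convex_ball] nz fin[folded Z_def] ZS]
    unfolding m_def by blast
  define Bd where "Bd = (\<lambda>w. \<Prod>z\<in>Z. ((of_real (R^2) - cnj z * w) / of_real R)^m z)"
  define H where "H = (\<lambda>w. h w * Bd w)"
  have Hholo: "H holomorphic_on ball 0 \<rho>"
    unfolding H_def Bd_def using rR by (intro holomorphic_intros h(1)) auto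
  have Hsph: "norm (H t) \<le> M" if t: "norm t = R" for t
  proof -
    have tin: "t \<in> ball 0 \<rho>" using t rR by auto
    have fac: "norm ((of_real (R^2) - cnj z * t) / of_real R) = norm (t - z)" for z
      by (simp only: norm_divide norm_of_real blaschke_sphere[OF t]) (use rR in simp)
    have "norm (Bd t) = (\<Prod>z\<in>Z. norm ((of_real (R^2) - cnj z * t) / of_real R) ^ m z)"
      unfolding Bd_def by (simp only: prod_norm[symmetric] norm_power)
    also have "\<dots> = (\<Prod>z\<in>Z. norm (t - z) ^ m z)" by (simp only: fac)
    also have "\<dots> = norm (\<Prod>z\<in>Z. (t - z)^m z)" by (simp only: prod_norm[symmetric] norm_power)
    finally have "norm (H t) = norm (g t)"
      unfolding H_def using h(2)[OF tin] by (simp add: norm_mult)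
    then show ?thesis using M[OF t] by simp
  qed
  have Hi: "H holomorphic_on interior (cball 0 R)"
    using Hholo by (rule holomorphic_on_subset) (use rR in auto)
  have Hc: "continuous_on (closure (cball 0 R)) H"
    using holomorphic_on_imp_continuous_on[OF Hholo] by (rule continuous_on_subset) (use rR in auto)
  have Hbound: "norm (H w) \<le> M" if "norm w \<le> R" for w
    by (rule maximum_modulus_frontier[OF Hi Hc]) (use that rR Hsph in auto)
  have wb: "w \<in> ball 0 \<rho>" using w rR by auto
  have "norm (\<Prod>z\<in>Z. (w - z)^m z) = (\<Prod>z\<in>Z. norm (w - z) ^ m z)" by (simp only: prod_norm[symmetric] norm_power)
  also have "\<dots> \<le> (\<Prod>z\<in>Z. (q * norm ((of_real (R^2) - cnj z * w) / of_real R)) ^ m z)"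
  proof (rule prod_mono, safe)
    fix z assume z: "z \<in> Z"
    have "R * norm (w - z) \<le> q * norm (of_real (R^2) - cnj z * w)"
      unfolding q_def by (rule blaschke_ineq) (use rR w z in \<open>auto simp: Z_def\<close>)
    then have "norm (w - z) \<le> q * norm ((of_real (R^2) - cnj z * w) / of_real R)"
      using rR by (simp add: norm_divide field_simps)
    then show "norm (w - z) ^ m z \<le> (q * norm ((of_real (R^2) - cnj z * w) / of_real R)) ^ m z"
      by (intro power_mono) auto
  qed simp
  also have "\<dots> = q ^ (\<Sum>z\<in>Z. m z) * norm (Bd w)"
    unfolding Bd_def by (simp add: power_mult_distrib prod.distrib power_sum prod_norm[symmetric] norm_power)
  finally have om: "norm (\<Prod>z\<in>Z. (w - z)^m z) \<le> q ^ (\<Sum>z\<in>Z. m z) * norm (Bd w)" .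
  have "norm (g w) = norm (\<Prod>z\<in>Z. (w - z)^m z) * norm (h w)" using h(2)[OF wb] by (simp add: norm_mult)
  also have "\<dots> \<le> q ^ (\<Sum>z\<in>Z. m z) * norm (Bd w) * norm (h w)"
    by (rule mult_right_mono[OF om]) simp
  also have "\<dots> = q ^ (\<Sum>z\<in>Z. m z) * norm (H w)" by (simp add: H_def norm_mult)
  also have "\<dots> \<le> q ^ (\<Sum>z\<in>Z. m z) * M"
    by (rule mult_left_mono) (use Hbound w rR q_def in auto)
  finally show ?thesis unfolding q_def Z_def m_def .
qed

lemma main_ineq:
  fixes F :: "complex \<Rightarrow> complex" and c :: "nat \<Rightarrow> complex" and p :: "complex poly"
  assumes holo: "F holomorphic_on ball 0 \<rho>" and rR: "0 < r" "r < R" "R < \<rho>"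
    and ser: "\<And>w. w \<in> ball 0 \<rho> \<Longrightarrow> (\<lambda>j. c j * w^j) sums F w"
    and summ: "summable (\<lambda>j. norm (c j) * R^j)"
    and der: "\<And>k. (deriv^^k) F 0 = fact k * c k"
    and deg: "degree p \<le> n"
    and fin: "finite {z \<in> cball 0 r. F z - poly p z = 0}"
    and nz: "\<exists>w\<in>ball 0 \<rho>. F w - poly p w \<noteq> 0"
    and cnt: "N \<le> (\<Sum>z\<in>{z \<in> cball 0 r. F z - poly p z = 0}. nat (zorder (\<lambda>z. F z - poly p z) z))"
    and small: "(real n + 1) * (2*r*R/(R^2+r^2))^N * (R/r)^n \<le> 1/2"
    and k: "n < k"
  shows "norm (c k) * r^k \<le> 4 * (real n + 1) * (R/r)^n * (2*r*R/(R^2+r^2))^N *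
            (\<Sum>j. if n < j then norm (c j) * R^j else 0)"
proof -
  define g where "g = (\<lambda>z. F z - poly p z)"
  define q where "q = 2*r*R/(R^2+r^2)"
  define T where "T = (\<Sum>j. if n < j then norm (c j) * R^j else 0)"
  define Y where "Y = (real n + 1) * (R/r)^n"
  have gholo: "g holomorphic_on ball 0 \<rho>" unfolding g_def by (intro holomorphic_intros holo)
  have q0: "0 \<le> q" "q \<le> 1"
  proof -
    show "0 \<le> q" unfolding q_def using rR by simp
    have "2*r*R \<le> R^2 + r^2" using sum_squares_ge_zero[of "R - r" 0] by (simp add: power2_eq_square algebra_simps)
    moreover have "0 < R^2 + r^2" using rR by (simp add: add_pos_pos)
    ultimately show "q \<le> 1" unfolding q_def by simp
  qed
  have Y1: "1 \<le> Y" unfolding Y_def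
  proof -
    have "1 \<le> (R/r)^n" using rR by (intro one_le_power) simp
    then show "1 \<le> (real n + 1) * (R / r) ^ n" by (simp add: algebra_simps) (smt (verit) mult_nonneg_nonneg of_nat_0_le_iff)
  qed
  have summT: "summable (\<lambda>j. if n < j then norm (c j) * R^j else 0)"
    by (rule summable_comparison_test[OF _ summ]) (use rR in auto)
  have T0: "0 \<le> T" unfolding T_def by (rule suminf_nonneg[OF summT]) (use rR in auto)
  define Tn where "Tn = (\<Sum>j\<le>n. monom (c j) j)"
  have polyTn: "poly Tn w = (\<Sum>j\<le>n. c j * w^j)" for w
    unfolding Tn_def by (simp add: poly_sum poly_monom)
  have degTn: "degree Tn \<le> n" unfolding Tn_def
    by (rule degree_sum_le) (auto intro: order_trans[OF degree_monom_le])
  define P where "P = p - Tn"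
  have degP: "degree P \<le> n" unfolding P_def using deg degTn degree_diff_le by blast
  have Gbound: "norm (F w - poly Tn w) \<le> T" if w: "norm w \<le> R" for w
  proof -
    have wb: "w \<in> ball 0 \<rho>" using w rR by auto
    have s1: "(\<lambda>j. if j \<le> n then c j * w^j else 0) sums (\<Sum>j\<le>n. c j * w^j)"
      using sums_If_finite_set[of "{..n}" "\<lambda>j. c j * w^j"] by (simp add: atMost_def)
    have "(\<lambda>j. c j * w^j - (if j \<le> n then c j * w^j else 0)) sums (F w - poly Tn w)"
      unfolding polyTn by (rule sums_diff[OF ser[OF wb] s1])
    moreover have "(\<lambda>j. c j * w^j - (if j \<le> n then c j * w^j else 0)) = (\<lambda>j. if n < j then c j * w^j else 0)"
      by auto
    ultimately have s2: "(\<lambda>j. if n < j then c j * w^j else 0) sums (F w - poly Tn w)" by simp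
    have le: "norm (if n < j then c j * w^j else 0) \<le> (if n < j then norm (c j) * R^j else 0)" for j
      using w by (auto simp: norm_mult norm_power intro!: mult_left_mono power_mono)
    have sn: "summable (\<lambda>j. norm (if n < j then c j * w^j else 0))"
      by (rule summable_comparison_test[OF _ summT]) (use le in auto)
    have "norm (F w - poly Tn w) = norm (\<Sum>j. if n < j then c j * w^j else 0)"
      using s2 by (simp add: sums_iff)
    also have "\<dots> \<le> (\<Sum>j. norm (if n < j then c j * w^j else 0))" by (rule summable_norm[OF sn])
    also have "\<dots> \<le> T" unfolding T_def by (rule suminf_le[OF le sn summT])
    finally show ?thesis .
  qed
  obtain w0 where w0: "w0 \<in> cball 0 r" "\<And>y. y \<in> cball 0 r \<Longrightarrow> norm (g y) \<le> norm (g w0)"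
  proof -
    have "continuous_on (cball 0 r) (\<lambda>y. norm (g y))"
      by (intro continuous_intros holomorphic_on_imp_continuous_on[OF holomorphic_on_subset[OF gholo]]) (use rR in auto)
    then show ?thesis using continuous_attains_sup[of "cball 0 r" "\<lambda>y. norm (g y)"] that rR by auto
  qed
  define E where "E = norm (g w0)"
  have E0: "0 \<le> E" unfolding E_def by simp
  have Psph: "norm (poly P s) \<le> T + E" if s: "norm s = r" for s
  proof -
    have "poly P s = (F s - poly Tn s) - g s" unfolding P_def g_def by simp
    then have "norm (poly P s) \<le> norm (F s - poly Tn s) + norm (g s)" by (simp add: norm_triangle_ineq4)
    moreover have "norm (F s - poly Tn s) \<le> T" by (rule Gbound) (use s rR in auto)
    moreover have "norm (g s) \<le> E" unfolding E_def by (rule w0(2)) (use s in auto)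
    ultimately show ?thesis by simp
  qed
  have gR: "norm (g t) \<le> T + Y * (T + E)" if t: "norm t = R" for t
  proof -
    have "g t = (F t - poly Tn t) - poly P t" unfolding P_def g_def by simp
    then have "norm (g t) \<le> norm (F t - poly Tn t) + norm (poly P t)" by (simp add: norm_triangle_ineq4)
    moreover have "norm (F t - poly Tn t) \<le> T" by (rule Gbound) (use t in auto)
    moreover have "norm (poly P t) \<le> Y * (T + E)" unfolding Y_def
      by (rule poly_growth_bound[OF degP rR(1) less_imp_le[OF rR(2)] Psph]) (use t in auto)
    ultimately show ?thesis by simp
  qed
  have finZ: "finite {z \<in> cball 0 r. g z = 0}" using fin unfolding g_def .
  have nzg: "\<exists>w\<in>ball 0 \<rho>. g w \<noteq> 0" using nz unfolding g_def .
  have "norm (g w0) \<le> q ^ (\<Sum>z\<in>{z \<in> cball 0 r. g z = 0}. nat (zorder g z)) * (T + Y * (T + E))"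
    unfolding q_def by (rule core[OF gholo rR finZ nzg gR]) (use w0 in auto)
  then have "E \<le> q ^ (\<Sum>z\<in>{z \<in> cball 0 r. g z = 0}. nat (zorder g z)) * (T + Y * (T + E))"
    by (simp only: E_def[symmetric])
  also have "\<dots> \<le> q ^ N * (T + Y * (T + E))"
    by (rule mult_right_mono, rule power_decreasing) (use cnt q0 T0 E0 Y1 in \<open>auto simp: g_def\<close>)
  finally have Eb: "E \<le> q ^ N * (T + Y * (T + E))" .
  have sm: "q^N * Y \<le> 1/2" using small unfolding Y_def q_def by (simp add: algebra_simps)
  have qN0: "0 \<le> q^N" using q0 by simp
  have "E \<le> q^N * T + q^N * Y * T + (q^N * Y) * E" using Eb by (simp add: algebra_simps)
  also have "(q^N * Y) * E \<le> 1/2 * E" by (rule mult_right_mono[OF sm E0])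
  finally have "E \<le> 2 * (q^N * T + q^N * Y * T)" by simp
  also have "\<dots> \<le> 4 * Y * q^N * T"
  proof -
    have "q^N * T \<le> q^N * Y * T" using Y1 qN0 T0 by (simp add: mult_right_mono mult_left_mono ordered_comm_semiring_class.comm_mult_left_mono
      mult.assoc) (metis mult_left_mono mult_right_mono mult.commute mult_1_left mult_nonneg_nonneg)
    then show ?thesis by (simp add: algebra_simps)
  qed
  finally have Efin: "E \<le> 4 * Y * q^N * T" .
  have "norm ((deriv ^^ k) g 0) \<le> fact k * E / r ^ k"
  proof (rule Cauchy_inequality)
    show "g holomorphic_on ball 0 r" using gholo by (rule holomorphic_on_subset) (use rR in auto)
    show "continuous_on (cball 0 r) g"
      using holomorphic_on_imp_continuous_on[OF gholo] by (rule continuous_on_subset) (use rR in auto)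
  qed (use rR w0 in \<open>auto simp: E_def norm_minus_commute\<close>)
  moreover have "(deriv ^^ k) g 0 = fact k * c k"
  proof -
    have "(deriv ^^ k) g 0 = (deriv ^^ k) F 0 - (deriv ^^ k) (poly p) 0"
      unfolding g_def by (rule higher_deriv_diff[where S="ball 0 \<rho>"]) (use holo rR in \<open>auto intro: holomorphic_intros\<close>)
    also have "(deriv ^^ k) (poly p) 0 = 0"
      using k deg by (simp add: higher_deriv_poly_0 coeff_eq_0)
    finally show ?thesis using der by simp
  qed
  ultimately have "fact k * norm (c k) \<le> fact k * (E / r ^ k)" by (simp add: norm_mult)
  then have "norm (c k) \<le> E / r^k" by (metis fact_gt_zero mult_le_cancel_left_pos)
  then have "norm (c k) * r^k \<le> E" using rR by (simp add: field_simps)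
  also have "\<dots> \<le> 4 * Y * q^N * T" by (rule Efin)
  finally show ?thesis unfolding Y_def q_def T_def by (simp add: algebra_simps)
qed

lemma final_numeric:
  fixes k :: nat and A :: real
  assumes k: "6 \<le> k" and A: "4096 \<le> A" and h: "A^(k-2) \<le> 4*real k*8^(k-1)*exp k*(real k+1)"
  shows False
proof -
  have kk: "k + 1 \<le> 2^k" using less_exp[of k] by (simp add: Suc_le_eq)
  have b: "real k + 1 \<le> 2^k"
  proof -
    have "real (k+1) \<le> real (2^k)" using kk by (simp only: of_nat_le_iff)
    then show ?thesis by simp
  qed
  have a: "real k \<le> 2^k" using b by simp
  have c: "exp (real k) \<le> 3^k"
  proof -
    have "exp (real k) = exp 1 ^ k" using exp_of_nat_mult[of k 1] by simp
    also have "\<dots> \<le> 3^k" by (rule power_mono[OF exp_le]) simp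
    finally show ?thesis .
  qed
  have d: "(8::real)^(k-1) \<le> 8^k" by (rule power_increasing) auto
  have "4*real k*8^(k-1)*exp k*(real k+1) \<le> 4*2^k*8^k*3^k*2^k"
  proof -
    have "4*real k \<le> 4*2^k" using a by simp
    then have "4*real k*8^(k-1) \<le> 4*2^k*8^k" using d by (rule mult_mono) auto
    then have "4*real k*8^(k-1)*exp k \<le> 4*2^k*8^k*3^k" using c by (rule mult_mono) auto
    then show ?thesis using b by (rule mult_mono) auto
  qed
  also have "(4::real)*2^k*8^k*3^k*2^k = 4 * (2*8*3*2)^k" by (simp only: power_mult_distrib mult.assoc)
  also have "\<dots> = 4 * 96^k" by simp
  finally have c3: "A^(k-2) \<le> 4 * 96^k" using h by linarith
  have "(4096::real)^(k-2) \<le> A^(k-2)" using A by (intro power_mono) auto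
  with c3 have c4: "(4096::real)^(k-2) \<le> 4 * 96^k" by linarith
  obtain m where m: "k = m + 6" using k by (metis add.commute le_Suc_ex)
  have "(4::real) * 96^k = (4 * 96^6) * 96^m" unfolding m by (simp only: power_add mult_ac)
  also have "\<dots> < 4096^4 * 4096^m"
  proof -
    have l: "(96::real)^m \<le> 4096^m" by (intro power_mono) auto
    have s: "(4::real) * 96^6 < 4096^4" by simp
    show ?thesis by (rule mult_less_le_imp_less[OF s l]) auto
  qed
  also have "\<dots> = 4096^(k-2)" unfolding m by (simp only: power_add[symmetric]) simp
  finally show False using c4 by simp
qed


lemma growth_contra:
  fixes b :: "nat \<Rightarrow> real" and A0 :: real and n0 :: nat
  assumes b0: "\<And>j. 0 \<le> b j"
    and summ: "\<And>A. 0 < A \<Longrightarrow> summable (\<lambda>j. b j * A^j)"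
    and inf: "\<And>m. \<exists>j\<ge>m. 0 < b j"
    and H: "\<And>n A. n0 \<le> n \<Longrightarrow> A0 \<le> A \<Longrightarrow>
              b (Suc n) \<le> 4*(real n+1)*8^n/A^(2*n) * (\<Sum>j. if n < j then b j * A^j else 0)"
  shows False
proof -
  define x where "x = (\<lambda>A j. b j * A^j)"
  define nu where "nu = (\<lambda>A. LEAST j. \<forall>i. x A i \<le> x A j)"
  obtain j0 where j0: "0 < b j0" using inf by blast
  have ex_max: "\<exists>j. \<forall>i. x A i \<le> x A j" if A: "0 < A" for A
  proof -
    have xj0: "0 < x A j0" unfolding x_def using j0 A by simp
    have "(\<lambda>i. x A i) \<longlonglongrightarrow> 0" unfolding x_def using summ[OF A] by (rule summable_LIMSEQ_zero)
    then have "eventually (\<lambda>i. x A i < x A j0) sequentially" using xj0 by (rule order_tendstoD(2))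
    then obtain M where M: "\<And>i. i \<ge> M \<Longrightarrow> x A i < x A j0" by (auto simp: eventually_sequentially)
    define M' where "M' = max M (Suc j0)"
    define m where "m = Max (x A ` {..M'})"
    have "m \<in> x A ` {..M'}" unfolding m_def by (rule Max_in) auto
    then obtain j where j: "j \<le> M'" "x A j = m" by auto
    have "x A i \<le> x A j" for i
    proof (cases "i \<le> M'")
      case True
      then show ?thesis unfolding j(2) m_def by (intro Max_ge) auto
    next
      case False
      then have "x A i < x A j0" using M unfolding M'_def by auto
      also have "x A j0 \<le> m" unfolding m_def by (intro Max_ge) (auto simp: M'_def)
      finally show ?thesis using j by simp
    qed
    then show ?thesis by blast
  qed
  have nu_max: "x A i \<le> x A (nu A)" if "0 < A" for A i
    using LeastI_ex[OF ex_max[OF that]] unfolding nu_def by blast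
  have nu_less: "x A i < x A (nu A)" if "0 < A" "i < nu A" for A i
  proof -
    have "\<not> (\<forall>i'. x A i' \<le> x A i)" using not_less_Least[OF that(2)[unfolded nu_def]] .
    then obtain i' where "x A i < x A i'" by (auto simp: not_le)
    then show ?thesis using nu_max[OF that(1), of i'] by simp
  qed
  have nu_pos: "0 < b (nu A)" if A: "0 < A" for A
  proof -
    have "0 < x A j0" unfolding x_def using j0 A by simp
    also have "\<dots> \<le> x A (nu A)" by (rule nu_max[OF A])
    finally show ?thesis unfolding x_def using A by (simp add: zero_less_mult_iff)
  qed
  have mono: "nu A \<le> nu B" if A: "0 < A" and AB: "A \<le> B" for A B
  proof (rule ccontr)
    assume "\<not> nu A \<le> nu B"
    then have lt: "nu B < nu A" by simp
    define j where "j = nu B"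
    define k where "k = nu A"
    have B: "0 < B" using A AB by simp
    have "x A j < x A k" unfolding j_def k_def by (rule nu_less[OF A lt])
    have sc: "x B i = x A i * (B/A)^i" for i unfolding x_def using A by (simp add: power_divide)
    have BA: "1 \<le> B/A" using A AB by simp
    have "x B j = x A j * (B/A)^j" by (rule sc)
    also have "\<dots> < x A k * (B/A)^j"
      using \<open>x A j < x A k\<close> BA by (intro mult_strict_right_mono) auto
    also have "\<dots> \<le> x A k * (B/A)^k"
    proof (rule mult_left_mono)
      show "(B/A)^j \<le> (B/A)^k" using BA lt by (intro power_increasing) (auto simp: j_def k_def)
      show "0 \<le> x A k" unfolding x_def using b0 A by simp
    qed
    also have "\<dots> = x B k" by (rule sc[symmetric])
    finally have "x B j < x B k" .
    moreover have "x B k \<le> x B j" unfolding j_def by (rule nu_max[OF B])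
    ultimately show False by simp
  qed
  have unbounded: "\<exists>A\<ge>A1. 1 \<le> A \<and> K \<le> nu A" for A1 :: real and K :: nat
  proof -
    obtain j where j: "j \<ge> K" "0 < b j" using inf by blast
    define A where "A = 1 + \<bar>A1\<bar> + (\<Sum>i<K. b i) / b j"
    have s0: "0 \<le> (\<Sum>i<K. b i) / b j" using b0 j by (simp add: sum_nonneg)
    have A1: "1 \<le> A" "A1 \<le> A" unfolding A_def using s0 by auto
    have "K \<le> nu A"
    proof (rule ccontr)
      assume "\<not> K \<le> nu A"
      then have i: "nu A < K" by simp
      define i where "i = nu A"
      have ij: "i < j" using i j unfolding i_def by simp
      have "b i \<le> (\<Sum>i<K. b i)" using i b0 unfolding i_def by (intro member_le_sum) auto
      also have "\<dots> \<le> b j * (A - 1)"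
      proof -
        have "(\<Sum>i<K. b i) / b j \<le> A - 1" unfolding A_def by simp
        then show ?thesis using j(2) by (simp add: field_simps)
      qed
      finally have bi: "b i \<le> b j * (A - 1)" .
      have "x A i = b i * A^i" unfolding x_def by simp
      also have "\<dots> \<le> b i * A^(j - 1)"
        using ij A1 b0 by (intro mult_left_mono power_increasing) auto
      also have "\<dots> \<le> b j * (A - 1) * A^(j-1)"
        using bi A1 by (intro mult_right_mono) auto
      also have "\<dots> < b j * A * A^(j-1)"
        using j(2) A1 by (intro mult_strict_right_mono) auto
      also have "\<dots> = x A j" unfolding x_def using ij
        by (metis mult.assoc power_eq_if not_less_zero)
      finally have "x A i < x A j" .
      moreover have "x A j \<le> x A i" unfolding i_def using A1 by (intro nu_max) auto
      ultimately show False by simp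
    qed
    then show ?thesis using A1 by blast
  qed
  have iter: "\<And>A. nu B - nu A = d \<Longrightarrow> 0 < A \<Longrightarrow> 2 \<le> nu A \<Longrightarrow> A * exp (2 / nu A) \<le> B \<Longrightarrow>
      \<exists>A'\<ge>A. nu A \<le> nu A' \<and> nu (A' * (1 + 1 / nu A')) \<le> (nu A')^2" for B d
  proof (induction d rule: less_induct)
    case (less d)
    fix A assume d: "nu B - nu A = d" and A: "0 < A" and nu2: "2 \<le> nu A" and AB: "A * exp (2 / nu A) \<le> B"
    show "\<exists>A'\<ge>A. nu A \<le> nu A' \<and> nu (A' * (1 + 1 / nu A')) \<le> (nu A')^2"
    proof (cases "nu (A * (1 + 1 / nu A)) \<le> (nu A)^2")
      case True
      then show ?thesis by blast
    next
      case False
      define v where "v = nu A"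
      define A1 where "A1 = A * (1 + 1 / v)"
      define v1 where "v1 = nu A1"
      have v2: "2 \<le> v" using nu2 v_def by simp
      have vpos: "0 < real v" using v2 by simp
      have v1gt: "v^2 < v1" using False unfolding v1_def A1_def v_def by simp
      have "v * 2 \<le> v^2" using v2 by (simp add: power2_eq_square)
      then have v1ge: "2 * v \<le> v1" using v1gt by simp
      then have v1pos: "0 < real v1" using v2 by simp
      have A1pos: "0 < A1" unfolding A1_def using A vpos by (simp add: add_pos_pos)
      have a1: "A1 \<le> A * exp (1 / v)"
        unfolding A1_def using A by (intro mult_left_mono) (auto simp: add.commute)
      have a2: "A * exp (1/v) * exp (2 / v1) \<le> A * exp (2/v)"
      proof -
        have "2 / real v1 \<le> 1 / real v" using v1ge vpos v1pos by (simp add: field_simps)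
        then have "1 / real v + 2 / real v1 \<le> 2 / real v" by simp
        then have "exp (1/v) * exp (2/v1) \<le> exp (2/v)"
          by (simp only: exp_add[symmetric] exp_le_cancel_iff)
        then show ?thesis using A by (simp only: mult.assoc mult_le_cancel_left_pos)
      qed
      have "A1 * exp (2/v1) \<le> A * exp (1 / v) * exp (2/v1)"
        by (rule mult_right_mono[OF a1]) simp
      then have "A1 * exp (2/v1) \<le> A * exp (2/v)" using a2 by linarith
      then have A1B: "A1 * exp (2/v1) \<le> B" using AB v_def by simp
      have "A1 \<le> A1 * exp (2/v1)" using A1pos v1pos by simp
      then have "A1 \<le> B" using A1B by simp
      then have "v1 \<le> nu B" unfolding v1_def by (rule mono[OF A1pos])
      have vv1: "v < v1" using v1ge v2 by linarith
      have lt: "nu B - v1 < d" unfolding d[symmetric] v_def[symmetric]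
        by (rule diff_less_mono2) (use vv1 \<open>v1 \<le> nu B\<close> in auto)
      have "2 \<le> nu A1" using v1ge v2 v1_def by simp
      from less.IH[OF lt, of A1] this A1pos A1B
      obtain A' where A': "A' \<ge> A1" "nu A1 \<le> nu A'" "nu (A' * (1 + 1 / nu A')) \<le> (nu A')^2"
        unfolding v1_def by auto
      have "A \<le> A1" unfolding A1_def using A vpos by simp
      moreover have "nu A \<le> nu A1" using v1ge v_def v1_def by simp
      ultimately show ?thesis using A' by (meson order_trans)
    qed
  qed
  define K where "K = max (Suc n0) 6"
  obtain A1 where A1: "A1 \<ge> max A0 4096" "1 \<le> A1" "K \<le> nu A1" using unbounded by blast
  have nuA1: "2 \<le> nu A1" using A1(3) unfolding K_def by simp
  have "A1 * exp (2 / nu A1) \<le> A1 * exp 1"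
    using A1 nuA1 by (intro mult_left_mono) auto
  then obtain A where A: "A \<ge> A1" "nu A1 \<le> nu A" "nu (A * (1 + 1 / nu A)) \<le> (nu A)^2"
    using iter[OF refl, of A1 "A1 * exp 1"] A1 nuA1 by auto
  define k where "k = nu A"
  have Apos: "0 < A" "1 \<le> A" "A0 \<le> A" "4096 \<le> A" using A A1 by auto
  have kK: "K \<le> k" using A A1 unfolding k_def by simp
  have kpos: "0 < real k" using kK unfolding K_def by simp
  define \<rho> where "\<rho> = 1 + 1 / real k"
  have rho1: "1 < \<rho>" unfolding \<rho>_def using kpos by simp
  define A2 where "A2 = \<rho> * A"
  have A2pos: "0 < A2" unfolding A2_def using rho1 Apos by simp
  define k2 where "k2 = nu A2"
  have k2le: "k2 \<le> k^2" using A(3) unfolding k2_def A2_def k_def \<rho>_def by (simp add: mult.commute)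
  define \<mu> where "\<mu> = x A k"
  have bk: "0 < b k" unfolding k_def by (rule nu_pos[OF Apos(1)])
  have mu_pos: "0 < \<mu>" unfolding \<mu>_def x_def using bk Apos by simp
  have mu2: "x A2 k2 \<le> \<mu> * exp k"
  proof -
    have "x A2 k2 = x A k2 * \<rho>^k2" unfolding x_def A2_def by (simp add: power_mult_distrib)
    also have "\<dots> \<le> \<mu> * \<rho>^k2" unfolding \<mu>_def k_def
      using rho1 by (intro mult_right_mono nu_max Apos) auto
    also have "\<dots> \<le> \<mu> * \<rho>^(k^2)"
      using rho1 mu_pos k2le by (intro mult_left_mono power_increasing) auto
    also have "\<rho>^(k^2) \<le> exp k"
    proof -
      have "\<rho> \<le> exp (1 / real k)" unfolding \<rho>_def by (metis add.commute exp_ge_add_one_self)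
      then have "\<rho>^(k^2) \<le> exp (1 / real k) ^ (k^2)" using rho1 by (intro power_mono) auto
      also have "\<dots> = exp (real (k^2) * (1 / real k))" by (rule exp_of_nat_mult[symmetric])
      also have "real (k^2) * (1 / real k) = real k" using kpos by (simp add: power2_eq_square)
      finally show ?thesis by simp
    qed
    then have "\<mu> * \<rho>^(k^2) \<le> \<mu> * exp k" using mu_pos by simp
    finally show ?thesis .
  qed
  have geo: "summable (\<lambda>j. (1/\<rho>)^j)" "(\<Sum>j. (1/\<rho>)^j) = real k + 1"
  proof -
    show "summable (\<lambda>j. (1/\<rho>)^j)" using rho1 by (intro summable_geometric) simp
    have "(\<Sum>j. (1/\<rho>)^j) = 1 / (1 - 1/\<rho>)" using rho1 by (intro suminf_geometric) simp
    also have "\<dots> = real k + 1" unfolding \<rho>_def using kpos by (simp add: field_simps)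
    finally show "(\<Sum>j. (1/\<rho>)^j) = real k + 1" .
  qed
  have termb: "b j * A^j \<le> x A2 k2 * (1/\<rho>)^j" for j
  proof -
    have "b j * A^j = x A2 j * (1/\<rho>)^j" unfolding x_def A2_def using rho1
      by (simp add: power_mult_distrib power_divide field_simps)
    also have "\<dots> \<le> x A2 k2 * (1/\<rho>)^j" unfolding k2_def
      using rho1 by (intro mult_right_mono nu_max A2pos) auto
    finally show ?thesis .
  qed
  have S: "(\<Sum>j. if k - 1 < j then b j * A^j else 0) \<le> \<mu> * exp k * (real k + 1)"
  proof -
    have le: "(if k - 1 < j then b j * A^j else 0) \<le> x A2 k2 * (1/\<rho>)^j" for j
    proof -
      have "0 \<le> x A2 k2 * (1/\<rho>)^j" unfolding x_def using b0 A2pos rho1 by simp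
      then show ?thesis using termb[of j] by auto
    qed
    have sr: "summable (\<lambda>j. x A2 k2 * (1/\<rho>)^j)" by (intro summable_mult geo)
    have sl: "summable (\<lambda>j. if k - 1 < j then b j * A^j else 0)"
      by (rule summable_comparison_test[OF _ sr]) (use le b0 Apos in auto)
    have "(\<Sum>j. if k - 1 < j then b j * A^j else 0) \<le> (\<Sum>j. x A2 k2 * (1/\<rho>)^j)"
      by (rule suminf_le[OF le sl sr])
    also have "\<dots> = x A2 k2 * (real k + 1)" using geo by (simp add: suminf_mult)
    also have "\<dots> \<le> \<mu> * exp k * (real k + 1)" using mu2 kpos by (intro mult_right_mono) auto
    finally show ?thesis .
  qed
  have Hk: "b k \<le> 4*(real (k-1)+1)*8^(k-1)/A^(2*(k-1)) * (\<Sum>j. if k - 1 < j then b j * A^j else 0)"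
    using H[of "k-1" A] kK Apos unfolding K_def by (simp add: Suc_diff_1[OF kpos[simplified]])
  also have "\<dots> \<le> 4*(real (k-1)+1)*8^(k-1)/A^(2*(k-1)) * (\<mu> * exp k * (real k + 1))"
    by (intro mult_left_mono S) (use Apos in auto)
  finally have "b k \<le> 4*real k*8^(k-1)/A^(2*(k-1)) * (b k * A^k * exp k * (real k + 1))"
    using kpos unfolding \<mu>_def x_def by (simp add: of_nat_diff)
  moreover have "4*real k*8^(k-1)/A^(2*(k-1)) * (b k * A^k * exp k * (real k + 1)) =
      b k * (4*real k*8^(k-1) * A^k * exp k * (real k + 1) / A^(2*(k-1)))"
    using Apos by (simp add: field_simps)
  ultimately have "b k * 1 \<le> b k * (4*real k*8^(k-1) * A^k * exp k * (real k + 1) / A^(2*(k-1)))"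
    by linarith
  then have "1 \<le> 4*real k*8^(k-1) * A^k * exp k * (real k + 1) / A^(2*(k-1))"
    using bk by (simp only: mult_le_cancel_left_pos)
  then have "A^(2*(k-1)) \<le> 4*real k*8^(k-1) * A^k * exp k * (real k + 1)"
    using Apos by (simp add: le_divide_eq)
  then have c1: "A^k * A^(k-2) \<le> A^k * (4*real k*8^(k-1) * exp k * (real k + 1))"
  proof -
    assume h: "A^(2*(k-1)) \<le> 4*real k*8^(k-1) * A^k * exp k * (real k + 1)"
    have "2*(k-1) = k + (k-2)" using kK unfolding K_def by simp
    then have "A^(2*(k-1)) = A^k * A^(k-2)" by (simp add: power_add)
    then show ?thesis using h by (simp add: algebra_simps)
  qed
  then have c2: "A^(k-2) \<le> 4*real k*8^(k-1) * exp k * (real k + 1)"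
    using Apos by (simp add: mult_le_cancel_left_pos)
  show False by (rule final_numeric[OF _ _ c2]) (use kK Apos in \<open>auto simp: K_def\<close>)
qed

lemma eight_pow_bound:
  fixes n :: nat
  shows "(real n + 1) * (1/8)^n \<le> (1/4)^n"
proof -
  have "n + 1 \<le> 2^n" using less_exp[of n] by (simp add: Suc_le_eq)
  then have "real (n + 1) \<le> real (2^n)" by (simp only: of_nat_le_iff)
  then have "real n + 1 \<le> 2^n" by simp
  then have "(real n + 1) * (1/8)^n \<le> 2^n * (1/8)^n" by (rule mult_right_mono) simp
  also have "\<dots> = (2 * (1/8))^n" by (rule power_mult_distrib[symmetric])
  also have "\<dots> = (1/4)^n" by simp
  finally show ?thesis .
qed

lemma small_bound:
  fixes n :: nat
  assumes "1 \<le> n"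
  shows "(real n + 1) * (1/8)^n \<le> 1/2"
proof -
  have "(1/4::real)^n \<le> (1/4)^1" using assms by (intro power_decreasing) auto
  then show ?thesis using eight_pow_bound[of n] by simp
qed

lemma q_facts:
  fixes r R :: real
  assumes "0 < r" "r < R"
  shows "0 \<le> 2*r*R/(R^2+r^2)" "2*r*R/(R^2+r^2) < 1" "2*r*R/(R^2+r^2) \<le> 2*r/R"
proof -
  have pos: "0 < R^2 + r^2" using assms by (simp add: add_pos_pos)
  show "0 \<le> 2*r*R/(R^2+r^2)" using assms by simp
  have "0 < (R - r)^2" using assms by simp
  then have "2*r*R < R^2 + r^2" by (simp add: power2_eq_square algebra_simps)
  then show "2*r*R/(R^2+r^2) < 1" using pos by simp
  have "2*r*R/(R^2+r^2) \<le> 2*r*R/R^2"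
    using assms by (intro divide_left_mono) (auto simp: add_pos_pos)
  also have "\<dots> = 2*r/R" using assms by (simp add: power2_eq_square)
  finally show "2*r*R/(R^2+r^2) \<le> 2*r/R" .
qed

lemma phase1:
  fixes f :: "complex \<Rightarrow> complex" and r B :: real
  assumes holo: "f holomorphic_on ball 0 1" and r: "0 < r" "r < 1"
    and finz: "\<And>p. finite {z \<in> cball 0 r. f z - poly p z = 0}"
    and nzp: "\<And>p. \<exists>w\<in>ball 0 1. f w - poly p w \<noteq> 0"
    and hyp: "\<And>L::nat. \<exists>n0. \<forall>n\<ge>n0. \<exists>p. degree p \<le> n \<and>
                 L * n \<le> (\<Sum>z\<in>{z \<in> cball 0 r. f z - poly p z = 0}. nat (zorder (\<lambda>z. f z - poly p z) z))"
    and B: "0 < B"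
  shows "summable (\<lambda>j. norm ((deriv^^j) f 0 / fact j) * B^j)"
proof -
  define a where "a = (\<lambda>j. (deriv^^j) f 0 / fact j)"
  define R where "R = (1 + r) / 2"
  define A where "A = R / r"
  define q where "q = 2*r*R/(R^2+r^2)"
  have rR: "0 < r" "r < R" "R < 1" using r unfolding R_def by auto
  have A1: "1 \<le> A" "0 < A" using rR unfolding A_def by auto
  have q: "0 \<le> q" "q < 1" using q_facts[OF rR(1,2)] unfolding q_def by auto
  have ser: "(\<lambda>j. a j * w^j) sums f w" if "w \<in> ball 0 1" for w
    using holomorphic_power_series[OF holo that] unfolding a_def by simp
  have der: "(deriv^^k) f 0 = fact k * a k" for k unfolding a_def by simp
  define R' where "R' = (1 + R) / 2"
  have R'1: "R < R'" "R' < 1" using rR unfolding R'_def by auto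
  have summR: "summable (\<lambda>j. norm (a j) * R^j)"
  proof -
    have "summable (\<lambda>j. a j * (of_real R')^j)"
      using ser[of "of_real R'"] R'1 rR by (auto simp: sums_iff)
    then have "summable (\<lambda>j. norm (a j * (of_real R)^j))"
      by (rule powser_insidea) (use R'1 rR in auto)
    then show ?thesis using rR by (simp add: norm_mult norm_power)
  qed
  define S where "S = (\<Sum>j. norm (a j) * R^j)"
  define \<theta> where "\<theta> = min (1/8) (r / (8*B))"
  have th: "0 < \<theta>" "\<theta> \<le> 1/8" "\<theta> * B / r \<le> 1/8"
    using r B unfolding \<theta>_def by (auto simp: field_simps min_def)
  have "(\<lambda>L. q^L) \<longlonglongrightarrow> 0" using q by (intro LIMSEQ_power_zero) auto
  then have "eventually (\<lambda>L. q^L < \<theta> / A) sequentially"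
    using th A1 by (intro order_tendstoD(2)) auto
  then obtain L where L: "q^L < \<theta> / A" by (auto simp: eventually_sequentially)
  have qLA: "q^L * A \<le> \<theta>" using L A1 by (simp add: field_simps)
  obtain n0 where n0: "\<And>n. n \<ge> n0 \<Longrightarrow> \<exists>p. degree p \<le> n \<and>
      L * n \<le> (\<Sum>z\<in>{z \<in> cball 0 r. f z - poly p z = 0}. nat (zorder (\<lambda>z. f z - poly p z) z))"
    using hyp[of L] by blast
  have bound: "norm (a (Suc n)) * B^(Suc n) \<le> (4 * S * (B/r)) * (1/4)^n" if n: "n \<ge> max n0 1" for n
  proof -
    obtain p where p: "degree p \<le> n"
      "L * n \<le> (\<Sum>z\<in>{z \<in> cball 0 r. f z - poly p z = 0}. nat (zorder (\<lambda>z. f z - poly p z) z))"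
      using n0[of n] n by auto
    have qn: "q^(L*n) * A^n \<le> \<theta>^n"
    proof -
      have "q^(L*n) * A^n = (q^L * A)^n" by (simp add: power_mult power_mult_distrib)
      also have "\<dots> \<le> \<theta>^n" using qLA q A1 by (intro power_mono) auto
      finally show ?thesis .
    qed
    have th8: "\<theta>^n \<le> (1/8)^n" using th by (intro power_mono) auto
    have small: "(real n + 1) * q^(L*n) * (R/r)^n \<le> 1/2"
    proof -
      have "(real n + 1) * q^(L*n) * (R/r)^n = (real n + 1) * (q^(L*n) * A^n)" unfolding A_def by simp
      also have "\<dots> \<le> (real n + 1) * (1/8)^n" using qn th8 by (intro mult_left_mono) auto
      also have "\<dots> \<le> 1/2" using n by (intro small_bound) auto
      finally show ?thesis .
    qed
    have mi: "norm (a (Suc n)) * r^(Suc n) \<le> 4 * (real n + 1) * (R/r)^n * q^(L*n) *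
            (\<Sum>j. if n < j then norm (a j) * R^j else 0)"
      unfolding q_def
      by (rule main_ineq[OF holo rR ser summR der p(1) finz nzp p(2) small[unfolded q_def]]) auto
    have T: "(\<Sum>j. if n < j then norm (a j) * R^j else 0) \<le> S"
    proof -
      have le: "(if n < j then norm (a j) * R^j else 0) \<le> norm (a j) * R^j" for j using rR by auto
      have sT: "summable (\<lambda>j. if n < j then norm (a j) * R^j else 0)"
        by (rule summable_comparison_test[OF _ summR]) (use rR in auto)
      show ?thesis unfolding S_def by (rule suminf_le[OF le sT summR])
    qed
    have S0: "0 \<le> S" unfolding S_def using rR by (intro suminf_nonneg summR) auto
    have "norm (a (Suc n)) * r^(Suc n) \<le> 4 * (real n + 1) * (q^(L*n) * A^n) * S"
    proof -
      have "4 * (real n + 1) * (R/r)^n * q^(L*n) * (\<Sum>j. if n < j then norm (a j) * R^j else 0)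
            \<le> 4 * (real n + 1) * (R/r)^n * q^(L*n) * S"
        using T q A1 rR by (intro mult_left_mono) auto
      then show ?thesis using mi unfolding A_def by (simp add: mult_ac)
    qed
    also have "\<dots> \<le> 4 * (real n + 1) * \<theta>^n * S"
      using qn S0 by (intro mult_right_mono mult_left_mono) auto
    finally have c1: "norm (a (Suc n)) * r^(Suc n) \<le> 4 * (real n + 1) * \<theta>^n * S" .
    have "norm (a (Suc n)) * B^(Suc n) = (norm (a (Suc n)) * r^(Suc n)) * (B/r)^(Suc n)"
      using r by (simp add: power_divide field_simps)
    also have "\<dots> \<le> (4 * (real n + 1) * \<theta>^n * S) * (B/r)^(Suc n)"
      using c1 r B by (intro mult_right_mono) auto
    also have "\<dots> = (4 * S * (B/r)) * ((real n + 1) * (\<theta> * B / r)^n)"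
      by (simp add: power_mult_distrib power_divide mult_ac)
    also have "\<dots> \<le> (4 * S * (B/r)) * ((real n + 1) * (1/8)^n)"
      using th r B S0 by (intro mult_left_mono power_mono) (auto simp: zero_le_mult_iff)
    also have "\<dots> \<le> (4 * S * (B/r)) * (1/4)^n"
      using eight_pow_bound[of n] S0 r B by (intro mult_left_mono) auto
    finally show ?thesis .
  qed
  have "summable (\<lambda>n. (4 * S * (B/r)) * (1/4::real)^n)"
    by (intro summable_mult summable_geometric) auto
  then have "summable (\<lambda>n. norm (a (Suc n)) * B^(Suc n))"
    by (rule summable_comparison_test'[where N = "max n0 1"]) (use bound B in auto)
  then have "summable (\<lambda>n. norm (a n) * B^n)" using summable_Suc_iff[of "\<lambda>n. norm (a n) * B^n"] by blast
  then show ?thesis unfolding a_def .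
qed

lemma phase2:
  fixes f :: "complex \<Rightarrow> complex" and r :: real
  assumes holo: "f holomorphic_on ball 0 1" and r: "0 < r" "r < 1"
    and finz: "\<And>p. finite {z \<in> cball 0 r. f z - poly p z = 0}"
    and nzp: "\<And>p. \<exists>w\<in>ball 0 1. f w - poly p w \<noteq> 0"
    and hyp: "\<And>L::nat. \<exists>n0. \<forall>n\<ge>n0. \<exists>p. degree p \<le> n \<and>
                 L * n \<le> (\<Sum>z\<in>{z \<in> cball 0 r. f z - poly p z = 0}. nat (zorder (\<lambda>z. f z - poly p z) z))"
    and ph1: "\<And>B. 0 < B \<Longrightarrow> summable (\<lambda>j. norm ((deriv^^j) f 0 / fact j) * B^j)"
    and inf: "\<And>m. \<exists>j\<ge>m. (deriv^^j) f 0 / fact j \<noteq> 0"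
  shows False
proof -
  define a where "a = (\<lambda>j. (deriv^^j) f 0 / fact j)"
  define F where "F = (\<lambda>w. \<Sum>j. a j * w^j)"
  have serF: "(\<lambda>j. a j * w^j) sums F w" for w
  proof -
    have w1: "0 < norm w + 1" by (smt (verit) norm_ge_zero)
    have s1: "summable (\<lambda>j. norm (a j) * (norm w + 1)^j)" using ph1[OF w1] unfolding a_def .
    have "summable (\<lambda>j. norm (a j * w^j))"
      by (rule summable_comparison_test[OF _ s1])
         (auto simp: norm_mult norm_power intro!: mult_left_mono power_mono)
    then have "summable (\<lambda>j. a j * w^j)" by (rule summable_norm_cancel)
    then show ?thesis unfolding F_def by (rule summable_sums)
  qed
  have Fholo: "F holomorphic_on ball 0 \<rho>" for \<rho>
    by (rule power_series_holomorphic[where a = a]) (use serF in simp)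
  have Ff: "F w = f w" if "w \<in> ball 0 1" for w
  proof -
    have "(\<lambda>j. a j * w^j) sums f w"
      using holomorphic_power_series[OF holo that] unfolding a_def by simp
    then show ?thesis using serF[of w] by (metis sums_unique2)
  qed
  have derF: "(deriv^^k) F 0 = fact k * a k" for k
  proof -
    have "eventually (\<lambda>w. w \<in> ball 0 1) (nhds (0::complex))"
      by (intro eventually_nhds_in_open) auto
    then have "eventually (\<lambda>w. F w = f w) (nhds 0)" by eventually_elim (use Ff in auto)
    then have "(deriv^^k) F 0 = (deriv^^k) f 0" by (rule higher_deriv_cong_ev) simp
    then show ?thesis unfolding a_def by simp
  qed
  have Zeq: "{z \<in> cball 0 r. F z - poly p z = 0} = {z \<in> cball 0 r. f z - poly p z = 0}" for p
    using Ff r by auto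
  have zeq: "zorder (\<lambda>z. F z - poly p z) z = zorder (\<lambda>z. f z - poly p z) z" if "z \<in> cball 0 r" for p z
  proof (rule zorder_cong[OF _ refl])
    have zb: "z \<in> ball 0 1" using that r by auto
    show "eventually (\<lambda>w. F w - poly p w = f w - poly p w) (at z)"
      using eventually_at_in_open'[OF open_ball zb] by eventually_elim (use Ff in auto)
  qed
  define b where "b = (\<lambda>j. norm (a j) * r^j)"
  obtain n0 where n0: "\<And>n. n \<ge> n0 \<Longrightarrow> \<exists>p. degree p \<le> n \<and>
      3 * n \<le> (\<Sum>z\<in>{z \<in> cball 0 r. f z - poly p z = 0}. nat (zorder (\<lambda>z. f z - poly p z) z))"
    using hyp[of 3] by blast
  show False
  proof (rule growth_contra[of b "max n0 1" 8])
    show "0 \<le> b j" for j unfolding b_def using r by simp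
    show "summable (\<lambda>j. b j * A^j)" if "0 < A" for A
    proof -
      have "summable (\<lambda>j. norm (a j) * (r*A)^j)" using ph1[of "r*A"] that r unfolding a_def by simp
      then show ?thesis unfolding b_def by (simp add: power_mult_distrib mult_ac)
    qed
    show "\<exists>j\<ge>m. 0 < b j" for m using inf[of m] r unfolding b_def a_def by auto
    fix n :: nat and A :: real
    assume n: "max n0 1 \<le> n" and A: "8 \<le> A"
    obtain p where p: "degree p \<le> n"
      "3 * n \<le> (\<Sum>z\<in>{z \<in> cball 0 r. f z - poly p z = 0}. nat (zorder (\<lambda>z. f z - poly p z) z))"
      using n0[of n] n by auto
    define R where "R = r * A"
    define q where "q = 2*r*R/(R^2+r^2)"
    have rR: "0 < r" "r < R" "R < R + 1" using r A unfolding R_def by auto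
    have RA: "R / r = A" unfolding R_def using r by simp
    have q: "0 \<le> q" "q \<le> 2 / A" using q_facts[OF rR(1,2)] RA unfolding q_def
      by (auto simp: field_simps)
    have qA: "q^(3*n) * A^n \<le> 8^n / A^(2*n)"
    proof -
      have "q^(3*n) \<le> (2/A)^(3*n)" using q by (intro power_mono) auto
      then have "q^(3*n) * A^n \<le> (2/A)^(3*n) * A^n" using A by (intro mult_right_mono) auto
      also have "(2/A)^(3*n) * A^n = 8^n / A^(2*n)"
      proof -
        have "(2/A)^(3*n) = 8^n / A^(3*n)" by (simp add: power_divide power_mult)
        moreover have "A^(3*n) = A^(2*n) * A^n" by (simp add: power_add[symmetric])
        ultimately show ?thesis using A by (simp add: field_simps)
      qed
      finally show ?thesis .
    qed
    have e8: "8^n / A^(2*n) \<le> (1/8::real)^n"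
    proof -
      have "(8::real) * 8 \<le> A * A" using A by (intro mult_mono) auto
      then have "(64::real) \<le> A^2" by (simp add: power2_eq_square)
      then have "(64::real)^n \<le> (A^2)^n" by (intro power_mono) auto
      then have "(64::real)^n \<le> A^(2*n)" by (simp add: power_mult)
      then have "(8::real)^n / A^(2*n) \<le> 8^n / 64^n"
        using A by (intro divide_left_mono) auto
      also have "(8::real)^n / 64^n = (8/64)^n" by (rule power_divide[symmetric])
      also have "(8/64::real) = 1/8" by simp
      finally show ?thesis .
    qed
    have small: "(real n + 1) * q^(3*n) * (R/r)^n \<le> 1/2"
    proof -
      have "(real n + 1) * q^(3*n) * (R/r)^n = (real n + 1) * (q^(3*n) * A^n)" using RA by simp
      also have "\<dots> \<le> (real n + 1) * (1/8)^n" using qA e8 by (intro mult_left_mono) auto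
      also have "\<dots> \<le> 1/2" using n by (intro small_bound) auto
      finally show ?thesis .
    qed
    have summR: "summable (\<lambda>j. norm (a j) * R^j)" using ph1[of R] rR unfolding a_def by simp
    have finF: "finite {z \<in> cball 0 r. F z - poly p z = 0}" unfolding Zeq by (rule finz)
    have nzF: "\<exists>w\<in>ball 0 (R+1). F w - poly p w \<noteq> 0"
    proof -
      obtain w where "w \<in> ball 0 1" "f w - poly p w \<noteq> 0" using nzp[of p] by blast
      then show ?thesis using Ff[of w] rR by (intro bexI[of _ w]) auto
    qed
    have cntF: "3 * n \<le> (\<Sum>z\<in>{z \<in> cball 0 r. F z - poly p z = 0}. nat (zorder (\<lambda>z. F z - poly p z) z))"
    proof -
      have "(\<Sum>z\<in>{z \<in> cball 0 r. f z - poly p z = 0}. nat (zorder (\<lambda>z. F z - poly p z) z)) =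
            (\<Sum>z\<in>{z \<in> cball 0 r. f z - poly p z = 0}. nat (zorder (\<lambda>z. f z - poly p z) z))"
        by (rule sum.cong[OF refl]) (simp add: zeq)
      then show ?thesis unfolding Zeq using p(2) by simp
    qed
    have mi: "norm (a (Suc n)) * r^(Suc n) \<le> 4 * (real n + 1) * (R/r)^n * q^(3*n) *
            (\<Sum>j. if n < j then norm (a j) * R^j else 0)"
      unfolding q_def
      by (rule main_ineq[OF Fholo rR serF summR derF p(1) finF nzF cntF small[unfolded q_def]]) auto
    have Teq: "(\<Sum>j. if n < j then norm (a j) * R^j else 0) = (\<Sum>j. if n < j then b j * A^j else 0)"
      unfolding b_def R_def by (intro arg_cong[where f=suminf] ext) (simp add: power_mult_distrib mult.assoc)
    have T0: "0 \<le> (\<Sum>j. if n < j then b j * A^j else 0)"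
    proof -
      have "summable (\<lambda>j. norm (a j) * R^j)" by (rule summR)
      then have "summable (\<lambda>j. if n < j then norm (a j) * R^j else 0)"
        by (rule summable_comparison_test[rotated]) (use rR in auto)
      then show ?thesis unfolding Teq[symmetric] by (rule suminf_nonneg) (use rR in auto)
    qed
    have "b (Suc n) \<le> 4 * (real n + 1) * (q^(3*n) * A^n) * (\<Sum>j. if n < j then b j * A^j else 0)"
      using mi unfolding b_def Teq RA by (simp add: mult_ac)
    also have "\<dots> \<le> 4 * (real n + 1) * (8^n / A^(2*n)) * (\<Sum>j. if n < j then b j * A^j else 0)"
      using qA T0 by (intro mult_right_mono mult_left_mono) auto
    finally show "b (Suc n) \<le> 4*(real n+1)*8^n/A^(2*n) * (\<Sum>j. if n < j then b j * A^j else 0)"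
      by simp
  qed
qed

theorem theorem1p1:
  fixes f :: "complex \<Rightarrow> complex" and r :: real
  assumes "f holomorphic_on ball 0 1"
    and "0 < r" and "r < 1"
    and "((\<lambda>n. ereal_of_enat (N_K f (cball 0 r) n) / ereal (real n)) \<longlongrightarrow> (\<infinity>::ereal)) sequentially"
  shows "\<exists>p :: complex poly. \<forall>z \<in> ball 0 1. f z = poly p z"
proof (rule ccontr)
  assume np: "\<not> (\<exists>p :: complex poly. \<forall>z \<in> ball 0 1. f z = poly p z)"
  have holo: "f holomorphic_on ball 0 1" and r: "0 < r" "r < 1" using assms by auto
  have nzp: "\<exists>w\<in>ball 0 1. f w - poly p w \<noteq> 0" for p using np by auto
  have finz: "finite {z \<in> cball 0 r. f z - poly p z = 0}" for p
  proof (rule ccontr)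
    define U where "U = {z \<in> cball 0 r. f z - poly p z = 0}"
    assume "infinite {z \<in> cball 0 r. f z - poly p z = 0}"
    then have "infinite U" unfolding U_def .
    moreover have sub: "U \<subseteq> cball 0 r" unfolding U_def by auto
    ultimately obtain \<xi> where \<xi>: "\<xi> \<in> cball 0 r" "\<xi> islimpt U"
      using Heine_Borel_imp_Bolzano_Weierstrass[OF compact_cball] by blast
    have h1: "(\<lambda>z. f z - poly p z) holomorphic_on ball 0 1" by (intro holomorphic_intros holo)
    have sub1: "U \<subseteq> ball 0 1" unfolding U_def using r by auto
    have xi1: "\<xi> \<in> ball 0 1" using \<xi> r by auto
    have U0: "\<And>z. z \<in> U \<Longrightarrow> f z - poly p z = 0" unfolding U_def by auto
    have "f w - poly p w = 0" if w: "w \<in> ball 0 1" for w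
      by (rule analytic_continuation[OF h1 open_ball convex_connected[OF convex_ball] sub1 xi1 \<xi>(2)])
         (use U0 w in auto)
    then show False using nzp[of p] by auto
  qed
  have hyp: "\<exists>n0. \<forall>n\<ge>n0. \<exists>p. degree p \<le> n \<and>
      L * n \<le> (\<Sum>z\<in>{z \<in> cball 0 r. f z - poly p z = 0}. nat (zorder (\<lambda>z. f z - poly p z) z))"
    for L :: nat
  proof -
    have "eventually (\<lambda>n. ereal (real L) < ereal_of_enat (N_K f (cball 0 r) n) / ereal (real n)) sequentially"
      using assms(4) unfolding tendsto_PInfty by blast
    then obtain n0 where n0: "\<And>n. n \<ge> n0 \<Longrightarrow> ereal (real L) < ereal_of_enat (N_K f (cball 0 r) n) / ereal (real n)"
      by (auto simp: eventually_sequentially)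
    have "\<exists>p. degree p \<le> n \<and>
      L * n \<le> (\<Sum>z\<in>{z \<in> cball 0 r. f z - poly p z = 0}. nat (zorder (\<lambda>z. f z - poly p z) z))"
      if n: "n \<ge> max n0 1" for n
    proof -
      have lt: "ereal (real L) < ereal_of_enat (N_K f (cball 0 r) n) / ereal (real n)" using n0 n by auto
      have npos: "0 < real n" using n by auto
      have "enat (L * n) < N_K f (cball 0 r) n"
      proof (cases "N_K f (cball 0 r) n")
        case (enat m)
        then have "ereal (real L) < ereal (real m / real n)" using lt npos by simp
        then have "real L < real m / real n" by simp
        then have "real L * real n < real m" using npos by (simp add: field_simps)
        then have "L * n < m" by (metis of_nat_less_iff of_nat_mult)
        then show ?thesis using enat by simp
      next
        case infinity
        then show ?thesis by simp
      qed
      then have "\<exists>p\<in>{p :: complex poly. degree p \<le> n}. enat (L * n) < zero_count (\<lambda>z. f z - poly p z) (cball 0 r)"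
        unfolding N_K_def by (simp add: less_SUP_iff)
      then obtain p where p: "degree p \<le> n" "enat (L * n) < zero_count (\<lambda>z. f z - poly p z) (cball 0 r)"
        by auto
      have "zero_count (\<lambda>z. f z - poly p z) (cball 0 r) =
          enat (\<Sum>z\<in>{z \<in> cball 0 r. f z - poly p z = 0}. nat (zorder (\<lambda>z. f z - poly p z) z))"
        unfolding zero_count_def using finz[of p] by simp
      then show ?thesis using p by auto
    qed
    then show ?thesis by blast
  qed
  have ph1: "summable (\<lambda>j. norm ((deriv^^j) f 0 / fact j) * B^j)" if "0 < B" for B
    by (rule phase1[OF holo r finz nzp hyp that])
  have inf: "\<exists>j\<ge>m. (deriv^^j) f 0 / fact j \<noteq> 0" for m
  proof (rule ccontr)
    assume "\<not> (\<exists>j\<ge>m. (deriv^^j) f 0 / fact j \<noteq> 0)"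
    then have z: "\<And>j. j \<ge> m \<Longrightarrow> (deriv^^j) f 0 / fact j = 0" by auto
    define P where "P = (\<Sum>j<m. monom ((deriv^^j) f 0 / fact j) j)"
    have "f w = poly P w" if w: "w \<in> ball 0 1" for w
    proof -
      have s1: "(\<lambda>j. (deriv^^j) f 0 / fact j * w^j) sums f w"
        using holomorphic_power_series[OF holo w] by simp
      have s2: "(\<lambda>j. (deriv^^j) f 0 / fact j * w^j) sums (\<Sum>j\<in>{..<m}. (deriv^^j) f 0 / fact j * w^j)"
      proof (rule sums_finite)
        fix j assume "j \<notin> {..<m}"
        then have "(deriv^^j) f 0 / fact j = 0" using z by simp
        then show "(deriv^^j) f 0 / fact j * w^j = 0" by simp
      qed simp
      have "f w = (\<Sum>j<m. (deriv^^j) f 0 / fact j * w^j)" by (rule sums_unique2[OF s1 s2])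
      also have "\<dots> = poly P w" unfolding P_def by (simp add: poly_sum poly_monom)
      finally show ?thesis .
    qed
    then show False using np by blast
  qed
  show False by (rule phase2[OF holo r finz nzp hyp ph1 inf])
qed

end
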